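(* Let $(r,s)\in\{0,\dots,m\}\times\{1,\dots,n\}$ and let $\mathcal{S}$ be an $(r,s)$-decomposed subspace of $\mathrm{Mat}_{m,n}(\mathbb{K})$ with the column property. Then the lower space of $\mathcal{S}$ has the column property.
   Context: Matrix spaces are equivalent ($\sim$) if $\mathcal{M}=P\mathcal{M}'Q$ with $P,Q$ invertible. A subspace is defective if none of its matrices has rank equal to its number of columns. $\mathcal{S}\subseteq\mathrm{Mat}_{m,n}(\mathbb{K})$ is $(r,s)$-decomposed ($0\le r\le m$, $1\le s\le n$) if every $M\in\mathcal{S}$ is of the form $\begin{bmatrix} ?_{r\times s}& C(M)\\ B(M)&0_{(m-r)\times(n-s)}\end{bmatrix}$ with $B(M)\in\mathrm{Mat}_{m-r,s}(\mathbb{K})$; its lower space is $B(\mathcal{S})$. $\mathcal{S}$ has the column property if for every such $(r,s)$ and every $(r,s)$-decomposed $\mathcal{S}'\sim\mathcal{S}$, the lower space of $\mathcal{S}'$ is defective. *)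

theory Defs
  imports "Jordan_Normal_Form.DL_Rank"
begin

definition mat_rank :: "nat \<Rightarrow> 'a::field mat \<Rightarrow> nat" where
  "mat_rank m A = vec_space.rank m A"

definition is_subspace :: "nat \<Rightarrow> nat \<Rightarrow> 'a::field mat set \<Rightarrow> bool" where
  "is_subspace m n S \<longleftrightarrow> S \<subseteq> carrier_mat m n \<and> 0\<^sub>m m n \<in> S \<and>
     (\<forall>A\<in>S. \<forall>B\<in>S. A + B \<in> S) \<and> (\<forall>c. \<forall>A\<in>S. c \<cdot>\<^sub>m A \<in> S)"

definition mat_space_equiv :: "nat \<Rightarrow> nat \<Rightarrow> 'a::field mat set \<Rightarrow> 'a mat set \<Rightarrow> bool" where
  "mat_space_equiv m n S S' \<longleftrightarrow>
     (\<exists>P Q. P \<in> carrier_mat m m \<and> invertible_mat P \<and> Q \<in> carrier_mat n n \<and> invertible_mat Q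
        \<and> S = (\<lambda>M. P * M * Q) ` S')"

definition defective :: "nat \<Rightarrow> nat \<Rightarrow> 'a::field mat set \<Rightarrow> bool" where
  "defective m n S \<longleftrightarrow> (\<forall>M\<in>S. mat_rank m M \<noteq> n)"

definition decomposed :: "nat \<Rightarrow> nat \<Rightarrow> nat \<Rightarrow> nat \<Rightarrow> 'a::field mat set \<Rightarrow> bool" where
  "decomposed m n r s S \<longleftrightarrow> r \<le> m \<and> 1 \<le> s \<and> s \<le> n \<and>
     (\<forall>M\<in>S. \<forall>i j. r \<le> i \<and> i < m \<and> s \<le> j \<and> j < n \<longrightarrow> M $$ (i, j) = 0)"

definition lower_block :: "nat \<Rightarrow> nat \<Rightarrow> nat \<Rightarrow> 'a mat \<Rightarrow> 'a mat" where
  "lower_block m r s M = mat (m - r) s (\<lambda>(i, j). M $$ (i + r, j))"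

definition lower_space :: "nat \<Rightarrow> nat \<Rightarrow> nat \<Rightarrow> 'a mat set \<Rightarrow> 'a mat set" where
  "lower_space m r s S = lower_block m r s ` S"

definition column_property :: "nat \<Rightarrow> nat \<Rightarrow> 'a::field mat set \<Rightarrow> bool" where
  "column_property m n S \<longleftrightarrow>
     (\<forall>r s S'. r \<le> m \<and> 1 \<le> s \<and> s \<le> n \<and> mat_space_equiv m n S' S
        \<and> decomposed m n r s S' \<longrightarrow> defective (m - r) s (lower_space m r s S'))"

end

theory Submission
  imports Defs
begin

lemma inv_carrier:
  assumes "P \<in> carrier_mat a a" "invertible_mat P"
  obtains P' where "P' \<in> carrier_mat a a" "P * P' = 1\<^sub>m a" "P' * P = 1\<^sub>m a"
proof -
  from assms obtain B where "inverts_mat P B" "inverts_mat B P"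
    unfolding invertible_mat_def by auto
  then have e1: "P * B = 1\<^sub>m a" and e2: "B * P = 1\<^sub>m (dim_row B)"
    using assms(1) unfolding inverts_mat_def by auto
  have "dim_col B = a" using e1 assms(1)
    by (metis index_mult_mat(3) index_one_mat(3))
  moreover have "dim_row B = a" using e2 assms(1)
    by (metis carrier_matD(2) index_mult_mat(3) index_one_mat(3))
  ultimately show ?thesis using that e1 e2 by auto
qed

lemma block_diag_invertible:
  fixes A D :: "'a::field mat"
  assumes "A \<in> carrier_mat a a" "invertible_mat A" "D \<in> carrier_mat d d" "invertible_mat D"
  shows "invertible_mat (four_block_mat A (0\<^sub>m a d) (0\<^sub>m d a) D)"
proof -
  obtain A' where A': "A' \<in> carrier_mat a a" "A * A' = 1\<^sub>m a" "A' * A = 1\<^sub>m a"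
    using inv_carrier[OF assms(1,2)] by blast
  obtain D' where D': "D' \<in> carrier_mat d d" "D * D' = 1\<^sub>m d" "D' * D = 1\<^sub>m d"
    using inv_carrier[OF assms(3,4)] by blast
  let ?M = "four_block_mat A (0\<^sub>m a d) (0\<^sub>m d a) D"
  let ?M' = "four_block_mat A' (0\<^sub>m a d) (0\<^sub>m d a) D'"
  have 1: "?M * ?M' = 1\<^sub>m (a + d)"
    using assms A' D' by (subst mult_four_block_mat, auto)
  have 2: "?M' * ?M = 1\<^sub>m (a + d)"
    using assms A' D' by (subst mult_four_block_mat, auto)
  show ?thesis unfolding invertible_mat_def inverts_mat_def square_mat.simps
    using 1 2 assms(1,3) A'(1) D'(1) by (intro conjI exI[of _ ?M'], auto)
qed

lemma one_invertible: "invertible_mat (1\<^sub>m k :: 'a::field mat)"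
  unfolding invertible_mat_def inverts_mat_def by (intro conjI exI[of _ "1\<^sub>m k"], auto)

lemma block_split:
  fixes M :: "'a::field mat"
  assumes M: "M \<in> carrier_mat m n" and rs: "r \<le> m" "s \<le> n"
    and z: "\<forall>i j. r \<le> i \<and> i < m \<and> s \<le> j \<and> j < n \<longrightarrow> M $$ (i, j) = 0"
  shows "M = four_block_mat (mat r s (\<lambda>(i,j). M $$ (i,j))) (mat r (n-s) (\<lambda>(i,j). M $$ (i,j+s)))
     (lower_block m r s M) (0\<^sub>m (m-r) (n-s))"
  using M rs z unfolding lower_block_def
  by (intro eq_matI, auto)

lemma block_prod:
  fixes M :: "'a::field mat"
  assumes M: "M \<in> carrier_mat m n" and rs: "r \<le> m" "s \<le> n"
    and z: "\<forall>i j. r \<le> i \<and> i < m \<and> s \<le> j \<and> j < n \<longrightarrow> M $$ (i, j) = 0"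
    and P: "P \<in> carrier_mat (m-r) (m-r)" and Q: "Q \<in> carrier_mat s s"
  shows "four_block_mat (1\<^sub>m r) (0\<^sub>m r (m-r)) (0\<^sub>m (m-r) r) P * M *
      four_block_mat Q (0\<^sub>m s (n-s)) (0\<^sub>m (n-s) s) (1\<^sub>m (n-s))
    = four_block_mat (mat r s (\<lambda>(i,j). M $$ (i,j)) * Q) (mat r (n-s) (\<lambda>(i,j). M $$ (i,j+s)))
       (P * lower_block m r s M * Q) (0\<^sub>m (m-r) (n-s))"
proof -
  let ?A = "mat r s (\<lambda>(i,j). M $$ (i,j))"
  let ?C = "mat r (n-s) (\<lambda>(i,j). M $$ (i,j+s))"
  let ?B = "lower_block m r s M"
  have B: "?B \<in> carrier_mat (m-r) s" unfolding lower_block_def by auto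
  have e: "M = four_block_mat ?A ?C ?B (0\<^sub>m (m-r) (n-s))" by (rule block_split[OF assms(1-4)])
  have 1: "four_block_mat (1\<^sub>m r) (0\<^sub>m r (m-r)) (0\<^sub>m (m-r) r) P * M
     = four_block_mat ?A ?C (P * ?B) (0\<^sub>m (m-r) (n-s))"
    apply (subst e)
    apply (subst mult_four_block_mat)
    using P B by auto
  show ?thesis
    apply (subst 1)
    apply (subst mult_four_block_mat)
    using P B Q by auto
qed

theorem mainTheorem13:
  fixes S :: "'a::field mat set"
  assumes "r \<le> m" and "1 \<le> s" and "s \<le> n"
    and "is_subspace m n S"
    and "decomposed m n r s S"
    and "column_property m n S"
  shows "column_property (m - r) s (lower_space m r s S)"
  unfolding column_property_def
proof (intro allI impI, elim conjE)
  fix r' s' T'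
  assume r': "r' \<le> m - r" and s'1: "1 \<le> s'" and s': "s' \<le> s"
    and eq: "mat_space_equiv (m - r) s T' (lower_space m r s S)"
    and dec: "decomposed (m - r) s r' s' T'"
  from eq obtain P Q where P: "P \<in> carrier_mat (m-r) (m-r)" "invertible_mat P"
    and Q: "Q \<in> carrier_mat s s" "invertible_mat Q"
    and T': "T' = (\<lambda>M. P * M * Q) ` lower_space m r s S"
    unfolding mat_space_equiv_def by blast
  have Scar: "S \<subseteq> carrier_mat m n" using assms(4) unfolding is_subspace_def by auto
  have z: "\<And>M. M \<in> S \<Longrightarrow> \<forall>i j. r \<le> i \<and> i < m \<and> s \<le> j \<and> j < n \<longrightarrow> M $$ (i, j) = 0"
    using assms(5) unfolding decomposed_def by auto
  define Pb where "Pb = four_block_mat (1\<^sub>m r) (0\<^sub>m r (m-r)) (0\<^sub>m (m-r) r) P"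
  define Qb where "Qb = four_block_mat Q (0\<^sub>m s (n-s)) (0\<^sub>m (n-s) s) (1\<^sub>m (n-s))"
  define S' where "S' = (\<lambda>M. Pb * M * Qb) ` S"
  have Pbc: "Pb \<in> carrier_mat m m" unfolding Pb_def using P assms(1) by auto
  have Qbc: "Qb \<in> carrier_mat n n" unfolding Qb_def using Q assms(3) by auto
  have Pbi: "invertible_mat Pb" unfolding Pb_def
    by (rule block_diag_invertible[OF one_carrier_mat _ P], rule one_invertible)
  have Qbi: "invertible_mat Qb" unfolding Qb_def
    by (rule block_diag_invertible[OF Q one_carrier_mat], rule one_invertible)
  have equiv: "mat_space_equiv m n S' S"
    unfolding mat_space_equiv_def S'_def using Pbc Pbi Qbc Qbi by blast
  have prod: "\<And>M. M \<in> S \<Longrightarrow> Pb * M * Qb = four_block_mat (mat r s (\<lambda>(i,j). M $$ (i,j)) * Q)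
       (mat r (n-s) (\<lambda>(i,j). M $$ (i,j+s))) (P * lower_block m r s M * Q) (0\<^sub>m (m-r) (n-s))"
    unfolding Pb_def Qb_def
    using block_prod[OF _ assms(1,3) z P(1) Q(1)] Scar by auto
  have lbc: "\<And>M. lower_block m r s M \<in> carrier_mat (m-r) s" unfolding lower_block_def by auto
  have decT: "\<And>M. M \<in> S \<Longrightarrow> \<forall>i j. r' \<le> i \<and> i < m - r \<and> s' \<le> j \<and> j < s
      \<longrightarrow> (P * lower_block m r s M * Q) $$ (i, j) = 0"
    using dec unfolding decomposed_def T' lower_space_def by auto
  have decS': "decomposed m n (r + r') s' S'"
    unfolding decomposed_def
  proof (intro conjI ballI allI impI)
    show "r + r' \<le> m" using r' assms(1) by auto
    show "1 \<le> s'" by fact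
    show "s' \<le> n" using s' assms(3) by auto
  next
    fix M' i j assume "M' \<in> S'" and ij: "r + r' \<le> i \<and> i < m \<and> s' \<le> j \<and> j < n"
    then obtain M where M: "M \<in> S" and M': "M' = Pb * M * Qb" unfolding S'_def by auto
    have zz: "j < s \<Longrightarrow> (P * lower_block m r s M * Q) $$ (i - r, j) = 0"
    proof -
      assume js: "j < s"
      have "r' \<le> i - r \<and> i - r < m - r \<and> s' \<le> j \<and> j < s" using ij js by linarith
      then show ?thesis using decT[OF M] by blast
    qed
    show "M' $$ (i, j) = 0"
      unfolding M' prod[OF M]
      apply (subst index_mat_four_block(1))
      using ij zz assms(1,3) P(1) Q(1) lbc[of M] by (auto simp del: index_mult_mat(1))
  qed
  have low: "lower_space m (r + r') s' S' = lower_space (m - r) r' s' T'"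
    unfolding lower_space_def S'_def T' image_image
  proof (rule image_cong[OF refl])
    fix M assume M: "M \<in> S"
    show "lower_block m (r + r') s' (Pb * M * Qb) = lower_block (m - r) r' s' (P * lower_block m r s M * Q)"
      unfolding prod[OF M] lower_block_def
      using assms(1,3) s' r' P(1) Q(1) lbc[of M]
      by (intro eq_matI, auto simp: index_mat_four_block)
  qed
  have "defective (m - (r + r')) s' (lower_space m (r + r') s' S')"
    using assms(6) equiv decS' r' s'1 s' assms(3) unfolding column_property_def
    by (metis add.commute le_diff_conv2 assms(1) le_trans)
  then show "defective (m - r - r') s' (lower_space (m - r) r' s' T')"
    using low by (simp add: diff_diff_add)
qed

end
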